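(* Let $N$ be a Poisson process on $[0,\infty)$ with intensity $\lambda>0$, with points $0<X_1<X_2<\cdots$, and let $\epsilon>0$, $L>0$. For every positive integer $m$, $$\mathbb{E}[\beta_0(L)^m]=\sum_{k=1}^m \left\{ m \atop k\right\}\left(\frac{L}{\epsilon}-k\right)^k\left(\lambda\epsilon e^{-\epsilon\lambda}\right)^k\mathbf{1}_{\{L/\epsilon>k\}}.$$
   Context: A cluster is a maximal set of consecutive points $X_j,\dots,X_k$ with $X_{l+1}-X_l\le\epsilon$ for $j\le l<k$; its end is $X_k+\epsilon$. $\beta_0(L)$ is the number of clusters whose end is $\le L$ (number of complete clusters in $[0,L]$). $\left\{ m \atop k\right\}$ denotes the Stirling number of the second kind (number of partitions of an $m$-element set into $k$ nonempty blocks). *)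

theory Defs
  imports "HOL-Probability.Probability" "HOL-Combinatorics.Stirling"
begin

text \<open>Points of the process are X 1 < X 2 < ... (index 0 is unused, X 0 = 0).
  A cluster is a maximal block of consecutive indices j..k (j \<ge> 1) with all
  consecutive gaps \<le> eps; its end is X k + eps.\<close>

definition is_cluster :: "(nat \<Rightarrow> real) \<Rightarrow> real \<Rightarrow> nat \<Rightarrow> nat \<Rightarrow> bool" where
  "is_cluster X eps j k \<longleftrightarrow>
     1 \<le> j \<and> j \<le> k \<and>
     (\<forall>l. j \<le> l \<and> l < k \<longrightarrow> X (l + 1) - X l \<le> eps) \<and>
     (j = 1 \<or> X j - X (j - 1) > eps) \<and>
     X (k + 1) - X k > eps"

definition beta0 :: "(nat \<Rightarrow> real) \<Rightarrow> real \<Rightarrow> real \<Rightarrow> nat" where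
  "beta0 X eps L = card {(j, k). is_cluster X eps j k \<and> X k + eps \<le> L}"

definition poisson_points :: "'a measure \<Rightarrow> real \<Rightarrow> (nat \<Rightarrow> 'a \<Rightarrow> real) \<Rightarrow> bool" where
  "poisson_points M lam X \<longleftrightarrow>
     (\<exists>T :: nat \<Rightarrow> 'a \<Rightarrow> real.
        prob_space.indep_vars M (\<lambda>_. borel) T UNIV \<and>
        (\<forall>i. distributed M lborel (T i) (exponential_density lam)) \<and>
        (\<forall>n \<omega>. X n \<omega> = (\<Sum>i<n. T i \<omega>)))"

end

theory Submission
  imports Defs
begin


lemma exp_meas_le:
  assumes l: "0 < l"
  shows "measure (density lborel (exponential_density l)) {..a} = erlang_CDF 0 l a"
proof -
  interpret prob_space "density lborel (exponential_density l)"
    using prob_space_exponential_density[OF l] .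
  show ?thesis using emeasure_erlang_density[OF l, of 0 a]
    by (simp add: emeasure_eq_measure erlang_CDF_nonneg[OF l])
qed

lemma exp_shift:
  fixes l eps c t :: real
  assumes l: "0 < l" and eps: "0 \<le> eps" and c: "c = 0 \<or> c = 1"
  shows "measure (density lborel (exponential_density l)) {y. eps < y \<and> c*y \<le> t}
       = exp (-l*eps) * measure (density lborel (exponential_density l)) {y. c*y \<le> t - c*eps}"
proof -
  let ?D = "density lborel (exponential_density l)"
  interpret prob_space ?D
    using prob_space_exponential_density[OF l] .
  have sp: "space ?D = UNIV" by simp
  have le: "\<And>a. measure ?D {..a} = (if 0 \<le> a then 1 - exp (- l * a) else 0)"
    using exp_meas_le[OF l] erlang_CDF_0 by simp
  show ?thesis
  proof (cases "c = 0")
    case True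
    show ?thesis
    proof (cases "0 \<le> t")
      case t: True
      have "{y. eps < y \<and> c*y \<le> t} = space ?D - {..eps}" using True t by auto
      then have "measure ?D {y. eps < y \<and> c*y \<le> t} = 1 - measure ?D {..eps}"
        using prob_compl[of "{..eps}"] by simp
      also have "\<dots> = exp (-l*eps)" using le[of eps] eps by simp
      finally show ?thesis using True t prob_space by (simp add: sp)
    next
      case False
      then show ?thesis using True by simp
    qed
  next
    case False
    then have c1: "c = 1" using c by auto
    show ?thesis
    proof (cases "eps \<le> t")
      case t: True
      have "{y. eps < y \<and> c*y \<le> t} = {..t} - {..eps}" using c1 by auto
      then have "measure ?D {y. eps < y \<and> c*y \<le> t} = measure ?D {..t} - measure ?D {..eps}"
        using t by (simp add: finite_measure_Diff' Diff_Int_distrib2 Int_absorb2 subset_eq) 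
      also have "\<dots> = exp (-l*eps) - exp (-l*t)" using le[of t] le[of eps] t eps by simp
      also have "\<dots> = exp (-l*eps) * (1 - exp (-l*(t-eps)))"
        by (simp add: algebra_simps flip: exp_add)
      also have "\<dots> = exp (-l*eps) * measure ?D {y. c*y \<le> t - c*eps}"
        using le[of "t-eps"] t c1 by (simp add: atMost_def)
      finally show ?thesis .
    next
      case f: False
      have "{y. eps < y \<and> c*y \<le> t} = {}" using f c1 by auto
      moreover have "measure ?D {y. c*y \<le> t - c*eps} = 0"
        using le[of "t-eps"] f c1 by (simp add: atMost_def)
      ultimately show ?thesis by (metis mult_zero_right measure_empty)
    qed
  qed
qed



lemma (in prob_space) pair_emeasure_fubini:
  fixes V :: "'a \<Rightarrow> 'b" and W :: "'a \<Rightarrow> 'b"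
  assumes ind: "indep_var N1 V N W"
    and Q: "{p \<in> space (N1 \<Otimes>\<^sub>M N). Q p} \<in> sets (N1 \<Otimes>\<^sub>M N)"
  shows "emeasure M {\<omega> \<in> space M. Q (V \<omega>, W \<omega>)} =
         (\<integral>\<^sup>+w. emeasure (distr M N1 V) {y\<in>space N1. Q (y, w)} \<partial>distr M N W)"
proof -
  have rv: "random_variable N1 V" "random_variable N W"
    and eq: "distr M N1 V \<Otimes>\<^sub>M distr M N W = distr M (N1 \<Otimes>\<^sub>M N) (\<lambda>x. (V x, W x))"
    using ind unfolding indep_var_distribution_eq by auto
  have YW: "(\<lambda>x. (V x, W x)) \<in> measurable M (N1 \<Otimes>\<^sub>M N)" using rv by measurable
  interpret DY: prob_space "distr M N1 V" using rv by (simp add: prob_space_distr)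
  interpret DW: prob_space "distr M N W" using rv by (simp add: prob_space_distr)
  interpret P: pair_sigma_finite "distr M N1 V" "distr M N W" ..
  have "emeasure M {\<omega> \<in> space M. Q (V \<omega>, W \<omega>)} =
      emeasure (distr M (N1 \<Otimes>\<^sub>M N) (\<lambda>x. (V x, W x))) {p \<in> space (N1 \<Otimes>\<^sub>M N). Q p}"
    apply (subst emeasure_distr[OF YW Q])
    apply (rule arg_cong[where f="emeasure M"])
    using measurable_space[OF YW] by auto
  also have "\<dots> = emeasure (distr M N1 V \<Otimes>\<^sub>M distr M N W) {p \<in> space (N1 \<Otimes>\<^sub>M N). Q p}"
    by (simp add: eq)
  also have "\<dots> = (\<integral>\<^sup>+w. emeasure (distr M N1 V) ((\<lambda>y. (y, w)) -` {p \<in> space (N1 \<Otimes>\<^sub>M N). Q p}) \<partial>distr M N W)"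
  proof (rule P.emeasure_pair_measure_alt2)
    have "sets (distr M N1 V \<Otimes>\<^sub>M distr M N W) = sets (N1 \<Otimes>\<^sub>M N)"
      by (rule sets_pair_measure_cong) simp_all
    then show "{p \<in> space (N1 \<Otimes>\<^sub>M N). Q p} \<in> sets (distr M N1 V \<Otimes>\<^sub>M distr M N W)"
      using Q by (simp only:)
  qed
  also have "\<dots> = (\<integral>\<^sup>+w. emeasure (distr M N1 V) {y\<in>space N1. Q (y, w)} \<partial>distr M N W)"
    by (intro nn_integral_cong arg_cong[where f="emeasure (distr M N1 V)"])
       (auto simp: space_pair_measure)
  finally show ?thesis .
qed

lemma (in prob_space) mem_step:
  fixes V :: "'a \<Rightarrow> 'b" and W :: "'a \<Rightarrow> 'b" and g :: "'b \<Rightarrow> real"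
  assumes ind: "indep_var N1 V N W"
    and g[measurable]: "g \<in> borel_measurable N1"
    and Yd: "distributed M lborel (\<lambda>\<omega>. g (V \<omega>)) (exponential_density l)"
    and l: "0 < l" and eps: "0 \<le> eps" and c: "c = 0 \<or> c = 1"
    and phi[measurable]: "\<phi> \<in> borel_measurable N" and Pm: "{w \<in> space N. P w} \<in> sets N"
  shows "prob {\<omega> \<in> space M. eps < g (V \<omega>) \<and> c * g (V \<omega>) + \<phi> (W \<omega>) \<le> s \<and> P (W \<omega>)} =
         exp (-l*eps) * prob {\<omega> \<in> space M. c * g (V \<omega>) + \<phi> (W \<omega>) \<le> s - c*eps \<and> P (W \<omega>)}"
proof -
  have Pp[measurable]: "Measurable.pred N P" using Pm by (simp add: pred_def)
  have rv[measurable]: "V \<in> measurable M N1" "W \<in> measurable M N"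
    using ind unfolding indep_var_distribution_eq by auto
  let ?D = "density lborel (exponential_density l)"
  have DY: "distr M borel (\<lambda>\<omega>. g (V \<omega>)) = ?D"
    using distributed_distr_eq_density[OF Yd] by (metis distr_cong sets_lborel)
  interpret D: prob_space ?D using prob_space_exponential_density[OF l] .
  have tr: "emeasure (distr M N1 V) {y\<in>space N1. R (g y)} = emeasure ?D {y. R y}"
    if [measurable]: "Measurable.pred borel R" for R
  proof -
    have "emeasure (distr M N1 V) {y\<in>space N1. R (g y)} = emeasure M (V -` {y\<in>space N1. R (g y)} \<inter> space M)"
      by (rule emeasure_distr) measurable
    also have "\<dots> = emeasure M ((\<lambda>\<omega>. g (V \<omega>)) -` {y. R y} \<inter> space M)"
      using measurable_space[OF rv(1)] by (intro arg_cong[where f="emeasure M"]) auto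
    also have "\<dots> = emeasure (distr M borel (\<lambda>\<omega>. g (V \<omega>))) {y. R y}"
      by (rule emeasure_distr[symmetric]) measurable
    finally show ?thesis by (simp add: DY)
  qed
  have e1: "emeasure M {\<omega> \<in> space M. eps < g (V \<omega>) \<and> c * g (V \<omega>) + \<phi> (W \<omega>) \<le> s \<and> P (W \<omega>)} =
     (\<integral>\<^sup>+w. emeasure ?D {y. eps < y \<and> c * y + \<phi> w \<le> s \<and> P w} \<partial>distr M N W)"
    apply (subst pair_emeasure_fubini[OF ind, where Q="\<lambda>(y,w). eps < g y \<and> c * g y + \<phi> w \<le> s \<and> P w", simplified])
     apply measurable
    apply (rule nn_integral_cong)
    apply (subst tr[symmetric])
    by auto
  have e2: "emeasure M {\<omega> \<in> space M. c * g (V \<omega>) + \<phi> (W \<omega>) \<le> s - c*eps \<and> P (W \<omega>)} =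
     (\<integral>\<^sup>+w. emeasure ?D {y. c * y + \<phi> w \<le> s - c*eps \<and> P w} \<partial>distr M N W)"
    apply (subst pair_emeasure_fubini[OF ind, where Q="\<lambda>(y,w). c * g y + \<phi> w \<le> s - c*eps \<and> P w", simplified])
     apply measurable
    apply (rule nn_integral_cong)
    apply (subst tr[symmetric])
    by auto
  have pw: "emeasure ?D {y. eps < y \<and> c * y + \<phi> w \<le> s \<and> P w} =
      ennreal (exp (-l*eps)) * emeasure ?D {y. c * y + \<phi> w \<le> s - c*eps \<and> P w}" for w
  proof (cases "P w")
    case True
    have "{y. eps < y \<and> c * y + \<phi> w \<le> s \<and> P w} = {y. eps < y \<and> c*y \<le> s - \<phi> w}"
      "{y. c * y + \<phi> w \<le> s - c*eps \<and> P w} = {y. c*y \<le> (s - \<phi> w) - c*eps}"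
      using True by auto
    then show ?thesis
      using exp_shift[OF l eps c, of "s - \<phi> w"]
      by (simp add: D.emeasure_eq_measure ennreal_mult')
  qed simp
  have "emeasure M {\<omega> \<in> space M. eps < g (V \<omega>) \<and> c * g (V \<omega>) + \<phi> (W \<omega>) \<le> s \<and> P (W \<omega>)} =
      ennreal (exp (-l*eps)) * emeasure M {\<omega> \<in> space M. c * g (V \<omega>) + \<phi> (W \<omega>) \<le> s - c*eps \<and> P (W \<omega>)}"
    unfolding e1 e2 pw by (rule nn_integral_cmult) simp
  then have "ennreal (prob {\<omega> \<in> space M. eps < g (V \<omega>) \<and> c * g (V \<omega>) + \<phi> (W \<omega>) \<le> s \<and> P (W \<omega>)}) =
      ennreal (exp (-l*eps) * prob {\<omega> \<in> space M. c * g (V \<omega>) + \<phi> (W \<omega>) \<le> s - c*eps \<and> P (W \<omega>)})"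
    by (simp only: emeasure_eq_measure ennreal_mult[OF exp_ge_zero measure_nonneg])
  then show ?thesis
    by (subst (asm) ennreal_inj) auto
qed



lemma (in prob_space) core:
  fixes T :: "nat \<Rightarrow> 'a \<Rightarrow> real"
  assumes ind: "indep_vars (\<lambda>_. borel) T UNIV"
    and dist: "\<And>i. distributed M lborel (T i) (exponential_density l)"
    and l: "0 < l" and eps: "0 \<le> eps"
    and A: "finite A" and J: "finite J"
  shows "prob {\<omega>\<in>space M. (\<forall>a\<in>A. eps < T a \<omega>) \<and> (\<Sum>i\<in>J. T i \<omega>) \<le> s} =
     exp (-l*eps) ^ card A * prob {\<omega>\<in>space M. (\<Sum>i\<in>J. T i \<omega>) \<le> s - real (card (A \<inter> J)) * eps}"
  using A
proof (induction A arbitrary: s rule: finite_induct)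
  case empty
  then show ?case by simp
next
  case (insert a A)
  let ?N1 = "PiM {a} (\<lambda>_. borel) :: (nat \<Rightarrow> real) measure"
  let ?N = "PiM (UNIV - {a}) (\<lambda>_. borel) :: (nat \<Rightarrow> real) measure"
  let ?V = "\<lambda>\<omega>. restrict (\<lambda>i. T i \<omega>) {a}"
  let ?W = "\<lambda>\<omega>. restrict (\<lambda>i. T i \<omega>) (UNIV - {a})"
  let ?c = "if a \<in> J then 1 else 0 :: real"
  let ?phi = "\<lambda>w. \<Sum>i\<in>J - {a}. w i"
  let ?P = "\<lambda>w. \<forall>a'\<in>A. eps < w a'"
  have iv: "indep_var ?N1 ?V ?N ?W"
    by (rule indep_var_restrict[OF ind]) auto
  have g: "(\<lambda>f. f a) \<in> borel_measurable ?N1"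
    by (rule measurable_component_singleton) simp
  have Yd: "distributed M lborel (\<lambda>\<omega>. ?V \<omega> a) (exponential_density l)"
    using dist[of a] by simp
  have c: "?c = 0 \<or> ?c = 1" by simp
  have phi: "?phi \<in> borel_measurable ?N"
  proof (rule borel_measurable_sum)
    fix i assume "i \<in> J - {a}"
    then show "(\<lambda>w. w i) \<in> borel_measurable ?N"
      by (intro measurable_component_singleton) auto
  qed
  have Pp: "Measurable.pred ?N ?P"
  proof (rule pred_intros_finite(3)[OF insert.hyps(1)])
    fix i assume "i \<in> A"
    then have "i \<in> UNIV - {a}" using insert.hyps(2) by auto
    then have "(\<lambda>w. w i) \<in> borel_measurable ?N"
      by (intro measurable_component_singleton)
    then show "Measurable.pred ?N (\<lambda>w. eps < w i)" by measurable
  qed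
  then have Pm: "{w \<in> space ?N. ?P w} \<in> sets ?N" by (simp add: pred_def)
  have sumsplit: "(\<Sum>i\<in>J. T i \<omega>) = ?c * T a \<omega> + (\<Sum>i\<in>J - {a}. T i \<omega>)" for \<omega>
    using J by (cases "a \<in> J") (auto simp: sum.remove)
  have WV: "?V \<omega> a = T a \<omega>" for \<omega> by simp
  have Wphi: "?phi (?W \<omega>) = (\<Sum>i\<in>J - {a}. T i \<omega>)" for \<omega>
    by (rule sum.cong) auto
  have WP: "?P (?W \<omega>) = (\<forall>b\<in>A. eps < T b \<omega>)" for \<omega>
    using insert.hyps(2) by (auto intro!: ball_cong)
  have e1: "{\<omega>\<in>space M. (\<forall>b\<in>insert a A. eps < T b \<omega>) \<and> (\<Sum>i\<in>J. T i \<omega>) \<le> s} =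
    {\<omega> \<in> space M. eps < ?V \<omega> a \<and> ?c * ?V \<omega> a + ?phi (?W \<omega>) \<le> s \<and> ?P (?W \<omega>)}"
    by (rule Collect_cong) (simp only: WV Wphi WP sumsplit, blast)
  have e2: "{\<omega> \<in> space M. ?c * ?V \<omega> a + ?phi (?W \<omega>) \<le> s - ?c*eps \<and> ?P (?W \<omega>)} =
    {\<omega>\<in>space M. (\<forall>b\<in>A. eps < T b \<omega>) \<and> (\<Sum>i\<in>J. T i \<omega>) \<le> s - ?c*eps}"
    by (rule Collect_cong) (simp only: WV Wphi WP sumsplit, blast)
  have cd: "real (card (insert a A \<inter> J)) = ?c + real (card (A \<inter> J))"
    using insert.hyps J by (auto simp: Int_insert_left)
  have "prob {\<omega>\<in>space M. (\<forall>b\<in>insert a A. eps < T b \<omega>) \<and> (\<Sum>i\<in>J. T i \<omega>) \<le> s} =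
     exp (-l*eps) * prob {\<omega>\<in>space M. (\<forall>b\<in>A. eps < T b \<omega>) \<and> (\<Sum>i\<in>J. T i \<omega>) \<le> s - ?c*eps}"
    unfolding e1 e2[symmetric]
    by (rule mem_step[OF iv g Yd l eps c phi Pm])
  also have "\<dots> = exp (-l*eps) ^ card (insert a A) *
      prob {\<omega>\<in>space M. (\<Sum>i\<in>J. T i \<omega>) \<le> s - real (card (insert a A \<inter> J)) * eps}"
    unfolding insert.IH using insert.hyps by (simp add: cd algebra_simps)
  finally show ?case .
qed



lemma ennreal_suminf_swap:
  fixes f :: "nat \<Rightarrow> nat \<Rightarrow> ennreal"
  shows "(\<Sum>k. \<Sum>j. f k j) = (\<Sum>j. \<Sum>k. f k j)"
proof -
  have "(\<Sum>k. \<Sum>j. f k j) = (\<Sum>k. \<integral>\<^sup>+j. f k j \<partial>count_space UNIV)"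
    by (simp add: nn_integral_count_space_nat)
  also have "\<dots> = (\<integral>\<^sup>+j. (\<Sum>k. f k j) \<partial>count_space UNIV)"
    by (rule nn_integral_suminf[symmetric]) simp
  also have "\<dots> = (\<Sum>j. \<Sum>k. f k j)"
    by (simp add: nn_integral_count_space_nat)
  finally show ?thesis .
qed

lemma poisson_sums:
  fixes x :: real
  shows "(\<lambda>j. x^j * exp (-x) / fact j) sums 1"
proof -
  have "(\<lambda>j. exp (-x) * (x^j /\<^sub>R fact j)) sums (exp (-x) * exp x)"
    by (intro sums_mult exp_converges)
  then show ?thesis by (simp add: exp_minus field_simps)
qed

lemma erlang_CDF_tail:
  fixes x :: real
  assumes l: "0 < l" and t: "0 \<le> t"
  shows "ennreal (erlang_CDF k l t) =
    (\<Sum>j. ennreal (if k < j then (l*t)^j * exp (-(l*t)) / fact j else 0))"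
proof -
  let ?p = "\<lambda>j. (l*t)^j * exp (-(l*t)) / fact j"
  let ?f = "\<lambda>j. if k < j then ?p j else 0"
  have "(\<lambda>i. ?p (i + Suc k)) sums (1 - (\<Sum>i<Suc k. ?p i))"
    using poisson_sums[of "l*t"] sums_iff_shift[of ?p "Suc k" "1 - (\<Sum>i<Suc k. ?p i)"] by simp
  then have "(\<lambda>i. ?f (i + Suc k)) sums (1 - (\<Sum>i<Suc k. ?p i))" by simp
  then have s: "?f sums (1 - (\<Sum>i<Suc k. ?p i))"
    using sums_iff_shift[of ?f "Suc k"] by simp
  have sm: "summable ?f" and sv: "suminf ?f = 1 - (\<Sum>i<Suc k. ?p i)"
    using s by (auto simp: sums_iff)
  have nn: "\<And>j. 0 \<le> ?f j" using l t by simp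
  have "(\<Sum>j. ennreal (?f j)) = ennreal (1 - (\<Sum>i<Suc k. ?p i))"
    by (simp only: suminf_ennreal2[OF nn sm] sv)
  also have "1 - (\<Sum>i<Suc k. ?p i) = erlang_CDF k l t"
    using t by (simp only: erlang_CDF_def if_not_P[OF not_less[THEN iffD2, OF t]] lessThan_Suc_atMost minus_mult_left)
  finally show ?thesis by simp
qed

lemma sum_choose_lessThan: "(\<Sum>k<j. k choose q) = j choose Suc q"
proof (cases j)
  case 0 then show ?thesis by simp
next
  case (Suc n)
  then show ?thesis using sum_choose_upper[of q n] by (simp add: lessThan_Suc_atMost)
qed

lemma div_aux:
  assumes "(c::real) \<noteq> 0" "a*c = f" shows "c / f = 1 / a"
proof (cases "a = 0")
  case True then show ?thesis using assms by simp
next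
  case False then show ?thesis using assms by (auto simp: field_simps)
qed

lemma choose_fact_shift:
  "real ((i + Suc q) choose Suc q) / fact (i + Suc q) = 1 / (fact (Suc q) * fact i)"
proof -
  have h: "fact (Suc q) * fact i * ((i + Suc q) choose Suc q) = (fact (i + Suc q) :: nat)"
    using binomial_fact_lemma[of "Suc q" "i + Suc q"] by simp
  have "fact (Suc q) * fact i * real ((i + Suc q) choose Suc q) = (fact (i + Suc q) :: real)"
    using arg_cong[where f=real, OF h] by (simp only: of_nat_mult of_nat_fact)
  moreover have "real ((i + Suc q) choose Suc q) \<noteq> 0"
  proof -
    have "0 < (i + Suc q) choose Suc q" by (rule zero_less_binomial) simp
    then show ?thesis by (simp only: of_nat_0_less_iff[symmetric])
  qed
  ultimately show ?thesis by (rule div_aux[rotated])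
qed

lemma erlang_choose_series:
  assumes l: "0 < l" and t: "0 \<le> t"
  shows "(\<Sum>k. ennreal (real (k choose q) * erlang_CDF k l t)) = ennreal ((l*t)^Suc q / fact (Suc q))"
proof -
  let ?x = "l*t"
  let ?p = "\<lambda>j. ?x^j * exp (-?x) / fact j"
  have x: "0 \<le> ?x" using l t by simp
  have "(\<Sum>k. ennreal (real (k choose q) * erlang_CDF k l t))
      = (\<Sum>k. \<Sum>j. ennreal (real (k choose q)) * ennreal (if k < j then ?p j else 0))"
    by (intro suminf_cong) (simp only: ennreal_mult'[OF of_nat_0_le_iff] erlang_CDF_tail[OF l t] ennreal_suminf_cmult)
  also have "\<dots> = (\<Sum>j. \<Sum>k. ennreal (real (k choose q)) * ennreal (if k < j then ?p j else 0))"
    by (rule ennreal_suminf_swap)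
  also have "\<dots> = (\<Sum>j. ennreal (?p j * real (j choose Suc q)))"
  proof (rule suminf_cong)
    fix j
    have "(\<Sum>k. ennreal (real (k choose q)) * ennreal (if k < j then ?p j else 0))
        = (\<Sum>k<j. ennreal (real (k choose q)) * ennreal (if k < j then ?p j else 0))"
      by (rule suminf_finite) auto
    also have "\<dots> = (\<Sum>k<j. ennreal (real (k choose q) * ?p j))"
    proof (intro sum.cong refl)
      fix k assume "k \<in> {..<j}"
      then have "ennreal (real (k choose q)) * ennreal (if k < j then ?p j else 0) =
          ennreal (real (k choose q)) * ennreal (?p j)" by simp
      also have "\<dots> = ennreal (real (k choose q) * ?p j)"
        by (rule ennreal_mult'[symmetric]) simp
      finally show "ennreal (real (k choose q)) * ennreal (if k < j then ?p j else 0) =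
          ennreal (real (k choose q) * ?p j)" .
    qed
    also have "\<dots> = ennreal (\<Sum>k<j. real (k choose q) * ?p j)"
      using x by (intro sum_ennreal) auto
    also have "(\<Sum>k<j. real (k choose q) * ?p j) = ?p j * real (j choose Suc q)"
    proof -
      have h: "(\<Sum>k<j. real (k choose q)) = real (j choose Suc q)"
        by (simp only: of_nat_sum[symmetric] sum_choose_lessThan)
      show ?thesis by (simp only: sum_distrib_right[symmetric] h mult.commute)
    qed
    finally show "(\<Sum>k. ennreal (real (k choose q)) * ennreal (if k < j then ?p j else 0)) =
        ennreal (?p j * real (j choose Suc q))" .
  qed
  also have "\<dots> = ennreal (?x^Suc q / fact (Suc q))"
  proof -
    let ?g = "\<lambda>j. ?p j * real (j choose Suc q)"
    let ?K = "?x^Suc q / fact (Suc q) * exp (-?x)"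
    have s1: "(\<lambda>i. ?K * (?x^i /\<^sub>R fact i)) sums (?K * exp ?x)"
      by (intro sums_mult exp_converges)
    have Kx: "?K * exp ?x = ?x^Suc q / fact (Suc q)"
      by (simp add: exp_minus)
    have gi: "?g (i + Suc q) = ?K * (?x^i /\<^sub>R fact i)" for i
    proof -
      have "?g (i + Suc q) = ?x^(i + Suc q) * exp (-?x) * (real ((i + Suc q) choose Suc q) / fact (i + Suc q))"
        by simp
      also have "\<dots> = ?x^(i + Suc q) * exp (-?x) * (1 / (fact (Suc q) * fact i))"
        by (simp only: choose_fact_shift)
      also have "\<dots> = ?K * (?x^i /\<^sub>R fact i)"
        by (simp add: power_add divide_inverse inverse_mult_distrib mult_ac)
      finally show ?thesis .
    qed
    have G: "(\<lambda>i. ?g (i + Suc q)) = (\<lambda>i. ?K * (?x^i /\<^sub>R fact i))"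
      by (rule ext) (rule gi)
    have s2: "(\<lambda>i. ?g (i + Suc q)) sums (?x^Suc q / fact (Suc q))"
      using s1 unfolding G Kx .
    have z: "(\<Sum>i<Suc q. ?g i) = 0"
      by (intro sum.neutral ballI) (simp add: binomial_eq_0)
    have "?g sums (?x^Suc q / fact (Suc q) + (\<Sum>i<Suc q. ?g i))"
      using s2 sums_iff_shift[of ?g "Suc q"] by blast
    then have "?g sums (?x^Suc q / fact (Suc q))" by (simp only: z add_0_right)
    then have sm: "summable ?g" and sv: "suminf ?g = ?x^Suc q / fact (Suc q)"
      by (auto simp: sums_iff)
    have nn: "\<And>i. 0 \<le> ?g i" using x by simp
    show ?thesis by (simp only: suminf_ennreal2[OF nn sm] sv)
  qed
  finally show ?thesis .
qed



lemma choose_step: "x * (fact k * (x choose k)) = fact (Suc k) * (x choose Suc k) + k * (fact k * (x choose k))"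
proof (cases "k \<le> x")
  case True
  have a: "Suc k * (x choose Suc k) = (x - k) * (x choose k)"
    by (metis binomial_absorption binomial_absorb_comp)
  have "fact (Suc k) * (x choose Suc k) = fact k * (Suc k * (x choose Suc k))"
    by (simp add: fact_Suc algebra_simps)
  also have "\<dots> = fact k * ((x - k) * (x choose k))" by (simp only: a)
  finally have "fact (Suc k) * (x choose Suc k) + k * (fact k * (x choose k)) =
      fact k * ((x - k) * (x choose k)) + k * (fact k * (x choose k))" by simp
  also have "\<dots> = fact k * (((x - k) + k) * (x choose k))" by (simp add: algebra_simps)
  also have "(x - k) + k = x" using True by simp
  finally show ?thesis by (simp add: algebra_simps)
next
  case False
  then show ?thesis by (simp add: binomial_eq_0)
qed

lemma stirling_choose:
  "(x::nat) ^ n = (\<Sum>k\<le>n. Stirling n k * (fact k * (x choose k)))"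
proof (induction n)
  case 0
  then show ?case by simp
next
  case (Suc n)
  let ?f = "\<lambda>k. fact k * (x choose k) :: nat"
  have "x ^ Suc n = (\<Sum>k\<le>n. Stirling n k * (x * ?f k))"
    by (simp add: Suc sum_distrib_left algebra_simps)
  also have "\<dots> = (\<Sum>k\<le>n. Stirling n k * ?f (Suc k)) + (\<Sum>k\<le>n. Stirling n k * (k * ?f k))"
    by (simp add: choose_step algebra_simps sum.distrib)
  also have "(\<Sum>k\<le>n. Stirling n k * (k * ?f k)) = (\<Sum>k\<le>n. Suc k * Stirling n (Suc k) * ?f (Suc k))"
  proof (cases n)
    case 0 then show ?thesis by simp
  next
    case (Suc n')
    have "(\<Sum>k\<le>n. Stirling n k * (k * ?f k)) = (\<Sum>k\<le>n'. Stirling n (Suc k) * (Suc k * ?f (Suc k)))"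
      unfolding Suc by (subst sum.atMost_Suc_shift) simp
    also have "\<dots> = (\<Sum>k\<le>n. Suc k * Stirling n (Suc k) * ?f (Suc k))"
      unfolding Suc by (simp add: algebra_simps)
    finally show ?thesis .
  qed
  also have "(\<Sum>k\<le>n. Stirling n k * ?f (Suc k)) + (\<Sum>k\<le>n. Suc k * Stirling n (Suc k) * ?f (Suc k))
      = (\<Sum>k\<le>n. Stirling (Suc n) (Suc k) * ?f (Suc k))"
    by (simp add: sum.distrib[symmetric] algebra_simps)
  also have "\<dots> = (\<Sum>k\<le>Suc n. Stirling (Suc n) k * ?f k)"
    by (subst sum.atMost_Suc_shift) simp
  finally show ?case .
qed

lemma stirling_choose_real:
  assumes "1 \<le> m"
  shows "real x ^ m = (\<Sum>k=1..m. real (Stirling m k) * fact k * real (x choose k))"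
proof -
  have "real x ^ m = real (\<Sum>k\<le>m. Stirling m k * (fact k * (x choose k)))"
    by (simp only: stirling_choose[symmetric] of_nat_power)
  also have "\<dots> = (\<Sum>k\<le>m. real (Stirling m k) * fact k * real (x choose k))"
    by (simp add: of_nat_sum mult.assoc)
  also have "{..m} = insert 0 {1..m}" by auto
  also have "(\<Sum>k\<in>insert 0 {1..m}. real (Stirling m k) * fact k * real (x choose k)) =
      (\<Sum>k=1..m. real (Stirling m k) * fact k * real (x choose k))"
    using assms by (cases m) simp_all
  finally show ?thesis .
qed

lemma hockey:
  fixes S :: "nat set"
  assumes "finite S"
  shows "(\<Sum>n\<in>S. card (S \<inter> {..<n}) choose q) = card S choose Suc q"
  using assms
proof (induction S rule: finite_linorder_max_induct)
  case empty
  then show ?case by simp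
next
  case (insert b A)
  have bA: "b \<notin> A" using insert.hyps by auto
  have "(\<Sum>n\<in>insert b A. card (insert b A \<inter> {..<n}) choose q) =
      (card (insert b A \<inter> {..<b}) choose q) + (\<Sum>n\<in>A. card (insert b A \<inter> {..<n}) choose q)"
    using insert.hyps bA by simp
  also have "insert b A \<inter> {..<b} = A" using insert.hyps by auto
  also have "(\<Sum>n\<in>A. card (insert b A \<inter> {..<n}) choose q) = (\<Sum>n\<in>A. card (A \<inter> {..<n}) choose q)"
  proof (rule sum.cong)
    fix n assume "n \<in> A"
    then have "insert b A \<inter> {..<n} = A \<inter> {..<n}" using insert.hyps by auto
    then show "card (insert b A \<inter> {..<n}) choose q = card (A \<inter> {..<n}) choose q" by simp
  qed simp
  also have "\<dots> = card A choose Suc q" by (rule insert.IH)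
  finally show ?case using insert.hyps bA by simp
qed

lemma inner_count:
  fixes S :: "nat set"
  assumes S1: "\<forall>x\<in>S. 1 \<le> x"
  shows "(\<Sum>B\<in>{B. B \<subseteq> {1..k} \<and> card B = q}. (if insert (Suc k) B \<subseteq> S then 1 else 0 :: nat)) =
    (if Suc k \<in> S then card (S \<inter> {..<Suc k}) choose q else 0)"
proof (cases "Suc k \<in> S")
  case True
  have "(\<Sum>B\<in>{B. B \<subseteq> {1..k} \<and> card B = q}. (if insert (Suc k) B \<subseteq> S then 1 else 0 :: nat))
      = card {B \<in> {B. B \<subseteq> {1..k} \<and> card B = q}. insert (Suc k) B \<subseteq> S}"
    by (simp add: sum.inter_filter[symmetric])
  also have "{B \<in> {B. B \<subseteq> {1..k} \<and> card B = q}. insert (Suc k) B \<subseteq> S} =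
      {B. B \<subseteq> S \<inter> {..<Suc k} \<and> card B = q}"
    using True S1 by (auto; force)
  also have "card \<dots> = card (S \<inter> {..<Suc k}) choose q"
    by (rule n_subsets) simp
  finally show ?thesis using True by simp
next
  case False
  then show ?thesis by simp
qed



lemma cluster_unique:
  assumes "is_cluster x eps j1 k" "is_cluster x eps j2 k"
  shows "j1 = j2"
proof (rule ccontr)
  assume ne: "j1 \<noteq> j2"
  have aux: "False" if c1: "is_cluster x eps a k" and c2: "is_cluster x eps b k" and ab: "a < b" for a b
  proof -
    have "b \<noteq> 1" using c1 ab unfolding is_cluster_def by auto
    then have g: "x b - x (b - 1) > eps" using c2 unfolding is_cluster_def by auto
    have "a \<le> b - 1" "b - 1 < k" using ab c2 unfolding is_cluster_def by auto
    then have "x (b - 1 + 1) - x (b - 1) \<le> eps" using c1 unfolding is_cluster_def by blast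
    moreover have "b - 1 + 1 = b" using ab by simp
    ultimately show False using g by simp
  qed
  show False
  proof (cases "j1 < j2")
    case True then show ?thesis using aux[OF assms] by blast
  next
    case False then have "j2 < j1" using ne by simp
    then show ?thesis using aux[OF assms(2) assms(1)] by blast
  qed
qed

lemma cluster_exists:
  assumes k: "1 \<le> k" and gap: "eps < x (k + 1) - x k"
  shows "\<exists>j. is_cluster x eps j k"
proof -
  let ?C = "{j. 1 \<le> j \<and> j \<le> k \<and> (j = 1 \<or> eps < x j - x (j - 1))}"
  have fin: "finite ?C" by (rule finite_subset[of _ "{..k}"]) auto
  have ne: "1 \<in> ?C" using k by simp
  define j where "j = Max ?C"
  have jC: "j \<in> ?C" unfolding j_def using fin ne by (intro Max_in) auto
  have jmax: "\<And>i. i \<in> ?C \<Longrightarrow> i \<le> j" unfolding j_def using fin by simp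
  have inner: "x (l + 1) - x l \<le> eps" if "j \<le> l" "l < k" for l
  proof (rule ccontr)
    assume "\<not> x (l + 1) - x l \<le> eps"
    then have "l + 1 \<in> ?C" using that jC by auto
    then have "l + 1 \<le> j" by (rule jmax)
    then show False using that by simp
  qed
  have "is_cluster x eps j k"
    unfolding is_cluster_def using jC inner gap by auto
  then show ?thesis by blast
qed

lemma beta0_card:
  fixes x t :: "nat \<Rightarrow> real"
  assumes xt: "\<And>k. x (k + 1) - x k = t k"
  shows "beta0 x eps L = card {k. 1 \<le> k \<and> eps < t k \<and> x k \<le> L - eps}"
proof -
  let ?P = "{(j, k). is_cluster x eps j k \<and> x k + eps \<le> L}"
  let ?K = "{k. 1 \<le> k \<and> eps < t k \<and> x k \<le> L - eps}"
  have "bij_betw snd ?P ?K"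
  proof (rule bij_betwI')
    fix p q assume "p \<in> ?P" "q \<in> ?P"
    then show "(snd p = snd q) = (p = q)"
      using cluster_unique[of x eps "fst p" "snd p" "fst q"]
      by (cases p; cases q) auto
  next
    fix p assume "p \<in> ?P"
    then show "snd p \<in> ?K" using xt[of "snd p"] by (cases p) (auto simp: is_cluster_def)
  next
    fix k assume "k \<in> ?K"
    then have "1 \<le> k" "eps < x (k + 1) - x k" "x k + eps \<le> L" using xt[of k] by auto
    then obtain j where "is_cluster x eps j k" using cluster_exists by blast
    then show "\<exists>p\<in>?P. k = snd p" using \<open>x k + eps \<le> L\<close> by force
  qed
  then have "card ?P = card ?K" by (rule bij_betw_same_card)
  then show ?thesis unfolding beta0_def .
qed



lemma (in prob_space) sum_exp_CDF:
  assumes ind: "indep_vars (\<lambda>_. borel) T UNIV"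
    and dist: "\<And>i. distributed M lborel (T i) (exponential_density l)" and l: "0 < l"
  shows "prob {\<omega>\<in>space M. (\<Sum>i<Suc k. T i \<omega>) \<le> a} = erlang_CDF k l a"
proof -
  have D0: "distributed M lborel (\<lambda>\<omega>. \<Sum>i\<in>{..<Suc k}. T i \<omega>) (erlang_density (card {..<Suc k} - 1) l)"
    by (rule exponential_distributed_sum) (auto intro: indep_vars_subset[OF ind] dist l)
  then have D: "distributed M lborel (\<lambda>\<omega>. \<Sum>i<Suc k. T i \<omega>) (erlang_density k l)" by simp
  have m: "(\<lambda>\<omega>. \<Sum>i<Suc k. T i \<omega>) \<in> measurable M lborel" using distributed_measurable[OF D] .
  have "emeasure M {\<omega>\<in>space M. (\<Sum>i<Suc k. T i \<omega>) \<le> a} =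
      emeasure (distr M lborel (\<lambda>\<omega>. \<Sum>i<Suc k. T i \<omega>)) {..a}"
    by (subst emeasure_distr[OF m]) (auto intro!: arg_cong[where f="emeasure M"])
  also have "\<dots> = emeasure (density lborel (erlang_density k l)) {..a}"
    by (simp only: distributed_distr_eq_density[OF D])
  also have "\<dots> = erlang_CDF k l a" by (rule emeasure_erlang_density[OF l])
  finally have "ennreal (prob {\<omega>\<in>space M. (\<Sum>i<Suc k. T i \<omega>) \<le> a}) = ennreal (erlang_CDF k l a)"
    by (simp only: emeasure_eq_measure)
  then show ?thesis by (subst (asm) ennreal_inj) (auto simp: erlang_CDF_nonneg[OF l])
qed

lemma ennreal_count_indicator: "real (card (A::nat set)) = enn2real (\<Sum>k. indicator A k)"
proof -
  have "(\<Sum>k. indicator A k :: ennreal) = (\<integral>\<^sup>+k. indicator A k \<partial>count_space UNIV)"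
    by (simp add: nn_integral_count_space_nat)
  also have "\<dots> = emeasure (count_space UNIV) A" by simp
  finally have e: "(\<Sum>k. indicator A k :: ennreal) = emeasure (count_space UNIV) A" .
  show ?thesis
  proof (cases "finite A")
    case True then show ?thesis by (simp add: e emeasure_count_space)
  next
    case False then show ?thesis by (simp add: e)
  qed
qed

lemma infinite_indicator_sum: "infinite (N::nat set) \<Longrightarrow> (\<Sum>k. indicator N k :: ennreal) = \<infinity>"
proof -
  assume N: "infinite N"
  have "(\<Sum>k. indicator N k :: ennreal) = (\<integral>\<^sup>+k. indicator N k \<partial>count_space UNIV)"
    by (simp add: nn_integral_count_space_nat)
  also have "\<dots> = emeasure (count_space UNIV) N" by simp
  also have "\<dots> = \<infinity>" using N by simp
  finally show ?thesis .
qed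



theorem corollary4:
  fixes M :: "'a measure" and X :: "nat \<Rightarrow> 'a \<Rightarrow> real"
    and lam eps L :: real and m :: nat
  assumes "prob_space M"
    and "poisson_points M lam X"
    and "lam > 0" and "eps > 0" and "L > 0" and "m \<ge> 1"
  shows "prob_space.expectation M (\<lambda>\<omega>. (real (beta0 (\<lambda>n. X n \<omega>) eps L)) ^ m) =
    (\<Sum>k = 1..m. real (Stirling m k) * (L / eps - real k) ^ k
        * (lam * eps * exp (- eps * lam)) ^ k
        * (if L / eps > real k then 1 else 0))"
proof -
  interpret prob_space M by (rule assms(1))
  obtain T where ind: "indep_vars (\<lambda>_. borel) T UNIV"
    and dist: "\<And>i. distributed M lborel (T i) (exponential_density lam)"
    and XT: "\<And>n \<omega>. X n \<omega> = (\<Sum>i<n. T i \<omega>)"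
    using assms(2) unfolding poisson_points_def by blast
  have l: "0 < lam" and e: "0 < eps" and e0: "0 \<le> eps" using assms by auto
  have Tm[measurable]: "T i \<in> borel_measurable M" for i
    using distributed_measurable[OF dist[of i]] by simp
  define S where "S \<omega> = {k. 1 \<le> k \<and> eps < T k \<omega> \<and> (\<Sum>i<k. T i \<omega>) \<le> L - eps}" for \<omega>
  have beta: "beta0 (\<lambda>n. X n \<omega>) eps L = card (S \<omega>)" for \<omega>
    unfolding S_def XT by (rule beta0_card) simp
  have Spred[measurable]: "Measurable.pred M (\<lambda>\<omega>. k \<in> S \<omega>)" for k
    unfolding S_def mem_Collect_eq by measurable
  define E where "E n B = {\<omega>\<in>space M. \<forall>b\<in>insert n B. 1 \<le> b \<and> eps < T b \<omega> \<and> (\<Sum>i<b. T i \<omega>) \<le> L - eps}" for n B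
  have Em[measurable]: "E n B \<in> sets M" if "finite B" for n B
  proof -
    have "finite (insert n B)" using that by simp
    then show ?thesis unfolding E_def by measurable
  qed
  have E_S: "\<omega> \<in> E n B \<longleftrightarrow> \<omega> \<in> space M \<and> insert n B \<subseteq> S \<omega>" for \<omega> n B
    unfolding E_def S_def by auto
  define Sub where "Sub q k = {B. B \<subseteq> {1..k} \<and> card B = q}" for q k :: nat
  have SubB: "finite B \<and> B \<subseteq> {1..k} \<and> card B = q" if "B \<in> Sub q k" for B q k
    using that unfolding Sub_def by (auto intro: finite_subset)
  have Subfin: "finite (Sub q k)" for q k
    unfolding Sub_def by (rule finite_subset[of _ "Pow {1..k}"]) auto
  have Subcard: "card (Sub q k) = k choose q" for q k
    unfolding Sub_def using n_subsets[of "{1..k}" q] by simp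
  define G where "G q \<omega> = (\<Sum>k. \<Sum>B\<in>Sub q k. indicator (E (Suc k) B) \<omega> :: ennreal)" for q \<omega>
  have Gm[measurable]: "G q \<in> borel_measurable M" for q
  proof -
    have "(\<lambda>\<omega>. \<Sum>B\<in>Sub q k. indicator (E (Suc k) B) \<omega> :: ennreal) \<in> borel_measurable M" for k
      by (intro borel_measurable_sum borel_measurable_indicator Em) (use SubB in blast)
    then show ?thesis unfolding G_def by measurable
  qed
  have AEpos: "AE \<omega> in M. \<forall>i. 0 < T i \<omega>"
  proof (subst AE_all_countable, intro allI)
    fix i
    have z: "prob {\<omega>\<in>space M. T i \<omega> \<le> 0} = 0"
      using exponential_distributedD_le[OF dist[of i] _ l, of 0] by simp
    have "AE \<omega> in M. \<omega> \<notin> {\<omega>\<in>space M. T i \<omega> \<le> 0}"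
      using z by (subst (asm) prob_eq_0) measurable
    then show "AE \<omega> in M. 0 < T i \<omega>"
      using AE_space by eventually_elim auto
  qed
  define val where "val r = (if 0 \<le> L - real r * eps
      then exp (-lam*eps) ^ r * (lam * (L - real r * eps)) ^ r / fact r else 0)" for r :: nat
  have valn: "0 \<le> val r" for r
  proof (cases "0 \<le> L - real r * eps")
    case True
    then have "0 \<le> lam * (L - real r * eps)" using l by simp
    then show ?thesis unfolding val_def using True by simp
  qed (simp add: val_def)
  have pE: "emeasure M (E (Suc k) B) =
      ennreal (exp (-lam*eps) ^ Suc q * erlang_CDF k lam (L - real (Suc q) * eps))"
    if B: "B \<in> Sub q k" for q k B
  proof -
    have Bf: "finite B" "B \<subseteq> {1..k}" "card B = q" using SubB[OF B] by auto
    let ?F = "{\<omega>\<in>space M. (\<forall>b\<in>insert (Suc k) B. eps < T b \<omega>) \<and> (\<Sum>i\<in>{..<Suc k}. T i \<omega>) \<le> L - eps}"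
    have Fm: "?F \<in> sets M"
    proof -
      have "finite (insert (Suc k) B)" using Bf by simp
      then show ?thesis by measurable
    qed
    have AEeq: "AE \<omega> in M. \<omega> \<in> E (Suc k) B \<longleftrightarrow> \<omega> \<in> ?F"
      using AEpos
    proof eventually_elim
      case (elim \<omega>)
      show ?case
      proof
        assume "\<omega> \<in> E (Suc k) B" then show "\<omega> \<in> ?F" unfolding E_def by auto
      next
        assume F: "\<omega> \<in> ?F"
        have le: "(\<Sum>i<b. T i \<omega>) \<le> (\<Sum>i<Suc k. T i \<omega>)" if "b \<in> insert (Suc k) B" for b
        proof (rule sum_mono2)
          show "{..<b} \<subseteq> {..<Suc k}" using that Bf by auto
        qed (use elim in \<open>auto simp: less_imp_le\<close>)
        have "1 \<le> b" if "b \<in> insert (Suc k) B" for b using that Bf by auto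
        then show "\<omega> \<in> E (Suc k) B" using F le unfolding E_def by fastforce
      qed
    qed
    have "emeasure M (E (Suc k) B) = emeasure M ?F"
      by (rule emeasure_eq_AE[OF AEeq]) (use Bf in auto)
    also have "\<dots> = ennreal (prob ?F)" by (simp only: emeasure_eq_measure)
    also have "prob ?F = exp (-lam*eps) ^ card (insert (Suc k) B) *
        prob {\<omega>\<in>space M. (\<Sum>i\<in>{..<Suc k}. T i \<omega>) \<le> L - eps - real (card (insert (Suc k) B \<inter> {..<Suc k})) * eps}"
      by (rule core[OF ind dist l e0]) (use Bf in auto)
    also have "card (insert (Suc k) B) = Suc q"
    proof -
      have "Suc k \<notin> B" using Bf by auto
      then show ?thesis using Bf by simp
    qed
    also have "insert (Suc k) B \<inter> {..<Suc k} = B" using Bf by auto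
    also have "L - eps - real (card B) * eps = L - real (Suc q) * eps" using Bf by (simp add: algebra_simps)
    also have "prob {\<omega>\<in>space M. (\<Sum>i\<in>{..<Suc k}. T i \<omega>) \<le> L - real (Suc q) * eps} =
        erlang_CDF k lam (L - real (Suc q) * eps)"
      by (rule sum_exp_CDF[OF ind dist l])
    finally show ?thesis .
  qed
  have intG: "(\<integral>\<^sup>+\<omega>. G q \<omega> \<partial>M) = ennreal (val (Suc q))" for q
  proof -
    let ?t = "L - real (Suc q) * eps"
    let ?c = "exp (-lam*eps) ^ Suc q"
    have mk: "(\<lambda>\<omega>. \<Sum>B\<in>Sub q k. indicator (E (Suc k) B) \<omega> :: ennreal) \<in> borel_measurable M" for k
      by (intro borel_measurable_sum borel_measurable_indicator Em) (use SubB in blast)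
    have "(\<integral>\<^sup>+\<omega>. G q \<omega> \<partial>M) = (\<Sum>k. \<integral>\<^sup>+\<omega>. (\<Sum>B\<in>Sub q k. indicator (E (Suc k) B) \<omega>) \<partial>M)"
      unfolding G_def by (rule nn_integral_suminf[OF mk])
    also have "\<dots> = (\<Sum>k. ennreal (real (k choose q) * erlang_CDF k lam ?t) * ennreal ?c)"
    proof (rule suminf_cong)
      fix k
      have "(\<integral>\<^sup>+\<omega>. (\<Sum>B\<in>Sub q k. indicator (E (Suc k) B) \<omega>) \<partial>M) =
          (\<Sum>B\<in>Sub q k. \<integral>\<^sup>+\<omega>. indicator (E (Suc k) B) \<omega> \<partial>M)"
        by (rule nn_integral_sum) (use SubB in \<open>intro borel_measurable_indicator Em; blast\<close>)
      also have "\<dots> = (\<Sum>B\<in>Sub q k. ennreal (?c * erlang_CDF k lam ?t))"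
        by (intro sum.cong refl) (use SubB pE in \<open>simp only: nn_integral_indicator[OF Em]\<close>)
      also have "\<dots> = of_nat (card (Sub q k)) * ennreal (?c * erlang_CDF k lam ?t)"
        by simp
      also have "\<dots> = ennreal (real (k choose q) * erlang_CDF k lam ?t) * ennreal ?c"
        by (simp add: Subcard ennreal_of_nat_eq_real_of_nat ennreal_mult[symmetric] erlang_CDF_nonneg[OF l] mult_ac)
      finally show "(\<integral>\<^sup>+\<omega>. (\<Sum>B\<in>Sub q k. indicator (E (Suc k) B) \<omega>) \<partial>M) =
          ennreal (real (k choose q) * erlang_CDF k lam ?t) * ennreal ?c" .
    qed
    also have "\<dots> = (\<Sum>k. ennreal (real (k choose q) * erlang_CDF k lam ?t)) * ennreal ?c"
      by (rule ennreal_suminf_multc)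
    also have "\<dots> = ennreal (val (Suc q))"
    proof (cases "0 \<le> ?t")
      case True
      have "(\<Sum>k. ennreal (real (k choose q) * erlang_CDF k lam ?t)) = ennreal ((lam * ?t)^Suc q / fact (Suc q))"
        by (rule erlang_choose_series[OF l True])
      moreover have "val (Suc q) = (lam * ?t)^Suc q / fact (Suc q) * ?c"
        unfolding val_def using True by (simp add: mult_ac)
      moreover have "0 \<le> (lam * ?t)^Suc q / fact (Suc q)" using True l by simp
      ultimately show ?thesis by (simp add: ennreal_mult[symmetric])
    next
      case False
      then have "erlang_CDF k lam ?t = 0" for k by (simp add: erlang_CDF_def)
      then show ?thesis using False unfolding val_def by simp
    qed
    finally show ?thesis .
  qed
  have AEfin: "AE \<omega> in M. finite (S \<omega>)"
  proof -
    have "(\<integral>\<^sup>+\<omega>. G 0 \<omega> \<partial>M) \<noteq> \<infinity>" by (simp add: intG)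
    then have "AE \<omega> in M. G 0 \<omega> \<noteq> \<infinity>" by (rule nn_integral_PInf_AE[OF Gm])
    then show ?thesis using AE_space
    proof eventually_elim
      case (elim \<omega>)
      have Sub0: "Sub 0 k = {{}}" for k
      proof -
        have "B = {}" if "B \<subseteq> {1..k}" "card B = 0" for B
          using that finite_subset[of B "{1..k}"] by auto
        then show ?thesis unfolding Sub_def by auto
      qed
      have G0: "G 0 \<omega> = (\<Sum>k. indicator {k. Suc k \<in> S \<omega>} k)"
        unfolding G_def Sub0 using elim by (simp add: E_S indicator_def)
      show "finite (S \<omega>)"
      proof (rule ccontr)
        assume inf: "infinite (S \<omega>)"
        have "S \<omega> \<subseteq> Suc ` {k. Suc k \<in> S \<omega>}"
        proof
          fix n assume n: "n \<in> S \<omega>"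
          then have "1 \<le> n" by (simp add: S_def)
          then have "n = Suc (n - 1)" by simp
          then show "n \<in> Suc ` {k. Suc k \<in> S \<omega>}" using n by (metis (mono_tags) image_eqI mem_Collect_eq)
        qed
        then have "infinite {k. Suc k \<in> S \<omega>}" using inf finite_surj by blast
        then have "G 0 \<omega> = \<infinity>" using G0 infinite_indicator_sum by simp
        then show False using elim by simp
      qed
    qed
  qed
  have Gval: "G q \<omega> = of_nat (card (S \<omega>) choose Suc q)" if w: "\<omega> \<in> space M" and fin: "finite (S \<omega>)" for q \<omega>
  proof -
    have S1: "\<forall>x\<in>S \<omega>. 1 \<le> x" by (simp add: S_def)
    let ?N = "{k. Suc k \<in> S \<omega>}"
    have Nfin: "finite ?N" using fin by (rule finite_vimageI[where h=Suc, unfolded vimage_def]) simp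
    have "G q \<omega> = (\<Sum>k. of_nat (if Suc k \<in> S \<omega> then card (S \<omega> \<inter> {..<Suc k}) choose q else 0))"
      unfolding G_def
    proof (rule suminf_cong)
      fix k
      have "(\<Sum>B\<in>Sub q k. indicator (E (Suc k) B) \<omega> :: ennreal) =
          of_nat (\<Sum>B\<in>Sub q k. (if insert (Suc k) B \<subseteq> S \<omega> then 1 else 0 :: nat))"
        unfolding of_nat_sum by (rule sum.cong[OF refl]) (auto simp: indicator_def E_S w)
      also have "\<dots> = of_nat (if Suc k \<in> S \<omega> then card (S \<omega> \<inter> {..<Suc k}) choose q else 0)"
        unfolding Sub_def by (simp only: inner_count[OF S1])
      finally show "(\<Sum>B\<in>Sub q k. indicator (E (Suc k) B) \<omega> :: ennreal) =
          of_nat (if Suc k \<in> S \<omega> then card (S \<omega> \<inter> {..<Suc k}) choose q else 0)" .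
    qed
    also have "\<dots> = (\<Sum>k\<in>?N. of_nat (if Suc k \<in> S \<omega> then card (S \<omega> \<inter> {..<Suc k}) choose q else 0))"
      by (rule suminf_finite[OF Nfin]) simp
    also have "\<dots> = (\<Sum>k\<in>?N. of_nat (card (S \<omega> \<inter> {..<Suc k}) choose q))"
      by (rule sum.cong) auto
    also have "\<dots> = (\<Sum>n\<in>Suc ` ?N. of_nat (card (S \<omega> \<inter> {..<n}) choose q))"
      by (rule sum.reindex[symmetric, unfolded comp_def]) simp
    also have "Suc ` ?N = S \<omega>"
    proof
      show "Suc ` ?N \<subseteq> S \<omega>" by auto
      show "S \<omega> \<subseteq> Suc ` ?N"
      proof
        fix n assume n: "n \<in> S \<omega>"
        then have "1 \<le> n" using S1 by auto
        then have "n = Suc (n - 1)" by simp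
        then show "n \<in> Suc ` ?N" using n by (metis (mono_tags) image_eqI mem_Collect_eq)
      qed
    qed
    also have "(\<Sum>n\<in>S \<omega>. of_nat (card (S \<omega> \<inter> {..<n}) choose q) :: ennreal) =
        of_nat (\<Sum>n\<in>S \<omega>. card (S \<omega> \<inter> {..<n}) choose q)"
      by (simp add: of_nat_sum)
    also have "(\<Sum>n\<in>S \<omega>. card (S \<omega> \<inter> {..<n}) choose q) = card (S \<omega>) choose Suc q"
      by (rule hockey[OF fin])
    finally show ?thesis .
  qed
  have cardm: "(\<lambda>\<omega>. real (card (S \<omega>))) \<in> borel_measurable M"
  proof -
    have "(\<lambda>\<omega>. real (card (S \<omega>))) = (\<lambda>\<omega>. enn2real (\<Sum>k. indicator (S \<omega>) k))"
      by (simp add: ennreal_count_indicator)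
    also have "\<dots> \<in> borel_measurable M"
      unfolding indicator_def by measurable
    finally show ?thesis .
  qed
  define St where "St r = real (Stirling m r) * fact r" for r
  have Stn: "0 \<le> St r" for r by (simp add: St_def)
  have "prob_space.expectation M (\<lambda>\<omega>. (real (beta0 (\<lambda>n. X n \<omega>) eps L)) ^ m) =
      expectation (\<lambda>\<omega>. real (card (S \<omega>)) ^ m)"
    by (simp only: beta)
  also have "\<dots> = enn2real (\<integral>\<^sup>+\<omega>. ennreal (real (card (S \<omega>)) ^ m) \<partial>M)"
    by (rule integral_eq_nn_integral) (use cardm in auto)
  also have "(\<integral>\<^sup>+\<omega>. ennreal (real (card (S \<omega>)) ^ m) \<partial>M) =
      (\<integral>\<^sup>+\<omega>. (\<Sum>r\<in>{1..m}. ennreal (St r) * G (r - 1) \<omega>) \<partial>M)"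
  proof (rule nn_integral_cong_AE)
    show "AE \<omega> in M. ennreal (real (card (S \<omega>)) ^ m) = (\<Sum>r\<in>{1..m}. ennreal (St r) * G (r - 1) \<omega>)"
      using AEfin AE_space
    proof eventually_elim
      case (elim \<omega>)
      have "real (card (S \<omega>)) ^ m = (\<Sum>r=1..m. St r * real (card (S \<omega>) choose r))"
        unfolding St_def by (rule stirling_choose_real[OF assms(6)])
      then have "ennreal (real (card (S \<omega>)) ^ m) = (\<Sum>r=1..m. ennreal (St r * real (card (S \<omega>) choose r)))"
        using Stn by (simp add: sum_ennreal)
      also have "\<dots> = (\<Sum>r\<in>{1..m}. ennreal (St r) * G (r - 1) \<omega>)"
      proof (rule sum.cong[OF refl])
        fix r assume r: "r \<in> {1..m}"
        then have "Suc (r - 1) = r" by simp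
        then have "G (r - 1) \<omega> = of_nat (card (S \<omega>) choose r)"
          using Gval[OF elim(2) elim(1), of "r - 1"] by simp
        then show "ennreal (St r * real (card (S \<omega>) choose r)) = ennreal (St r) * G (r - 1) \<omega>"
          using Stn by (simp add: ennreal_mult ennreal_of_nat_eq_real_of_nat)
      qed
      finally show ?case .
    qed
  qed
  also have "\<dots> = (\<Sum>r\<in>{1..m}. ennreal (St r) * (\<integral>\<^sup>+\<omega>. G (r - 1) \<omega> \<partial>M))"
    by (subst nn_integral_sum) (auto intro!: sum.cong nn_integral_cmult[OF Gm])
  also have "\<dots> = (\<Sum>r\<in>{1..m}. ennreal (St r * val r))"
  proof (rule sum.cong[OF refl])
    fix r assume r: "r \<in> {1..m}"
    then have "Suc (r - 1) = r" by simp
    then show "ennreal (St r) * (\<integral>\<^sup>+\<omega>. G (r - 1) \<omega> \<partial>M) = ennreal (St r * val r)"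
    proof -
      have "(\<integral>\<^sup>+\<omega>. G (r - 1) \<omega> \<partial>M) = ennreal (val r)"
        using intG[of "r - 1"] \<open>Suc (r - 1) = r\<close> by simp
      then show ?thesis by (simp only: ennreal_mult'[OF Stn])
    qed
  qed
  also have "\<dots> = ennreal (\<Sum>r\<in>{1..m}. St r * val r)"
    by (rule sum_ennreal) (intro mult_nonneg_nonneg Stn valn)
  also have "enn2real \<dots> = (\<Sum>r\<in>{1..m}. St r * val r)"
    by (rule enn2real_ennreal) (intro sum_nonneg mult_nonneg_nonneg Stn valn)
  also have "\<dots> = (\<Sum>k = 1..m. real (Stirling m k) * (L / eps - real k) ^ k
        * (lam * eps * exp (- eps * lam)) ^ k
        * (if L / eps > real k then 1 else 0))"
  proof (rule sum.cong[OF refl])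
    fix r assume r: "r \<in> {1..m}"
    have fr: "fact r \<noteq> (0::real)" by simp
    have eq1: "(L / eps - real r) * eps = L - real r * eps" using e by (simp add: field_simps)
    have iff: "(real r < L / eps) \<longleftrightarrow> (0 < L - real r * eps)" using e by (simp add: field_simps)
    show "St r * val r = real (Stirling m r) * (L / eps - real r) ^ r
        * (lam * eps * exp (- eps * lam)) ^ r * (if L / eps > real r then 1 else 0)"
    proof (cases "0 < L - real r * eps")
      case True
      have "(L / eps - real r) ^ r * (lam * eps * exp (- eps * lam)) ^ r
          = ((L / eps - real r) * eps * lam * exp (- eps * lam)) ^ r"
        by (simp add: power_mult_distrib mult_ac)
      also have "\<dots> = (lam * (L - real r * eps) * exp (-lam*eps)) ^ r"
        by (simp only: eq1) (simp add: mult_ac)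
      finally have "(L / eps - real r) ^ r * (lam * eps * exp (- eps * lam)) ^ r =
          exp (-lam*eps) ^ r * (lam * (L - real r * eps)) ^ r"
        by (simp add: power_mult_distrib mult_ac)
      then show ?thesis using True iff fr unfolding St_def val_def
        by (simp add: mult_ac)
    next
      case False
      then have v: "val r = 0"
      proof (cases "L - real r * eps = 0")
        case True
        then show ?thesis using r unfolding val_def by simp
      next
        case False
        then show ?thesis using \<open>\<not> 0 < L - real r * eps\<close> unfolding val_def by simp
      qed
      show ?thesis using False iff v by simp
    qed
  qed
  finally show ?thesis .
qed

end
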